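(* Let $X,E,F,G$ be locally convex spaces over $\mathbb{K}$ such that $X$ is a $k^\infty$-space. Let $U\subseteq X$ be open, $n\in\mathbb{N}_0\cup\{\infty\}$, and let $\mathcal{S}=b$ or $\mathcal{S}=c$. If $f\colon U\to L(E,F)_{\mathcal{S}}$ and $g\colon U\to L(F,G)_{\mathcal{S}}$ are $C^n_{\mathbb{K}}$-maps, then the map $U\to L(E,G)_{\mathcal{S}}$, $z\mapsto g(z)\circ f(z)$, is $C^n_{\mathbb{K}}$.
   Context: $L(E,F)_b$ (resp. $L(E,F)_c$) is the space of continuous linear maps $E\to F$ with the topology of uniform convergence on bounded (resp. compact) subsets of $E$. $C^n_{\mathbb{K}}$-maps in Keller's sense: $f$ is $C^0$ if continuous; $C^1$ if continuous, all directional derivatives $df(x,y)=\lim_{t\to0}(f(x+ty)-f(x))/t$ exist and $df\colon U\times X\to F$ is continuous; $C^{n+1}$ if $C^1$ and $df$ is $C^n$; $C^\infty$ if $C^n$ for all $n$. A Hausdorff space $X$ is a $k$-space if a set is closed whenever its intersection with each compact set is closed in that compact set; $X$ is a $k^\infty$-space if it is Hausdorff and all finite powers $X^n$ are $k$-spaces (e.g. $X=\mathbb{K}=\mathbb{C}$, or any metrizable space). *)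

theory Defs
  imports "HOL-Analysis.Analysis" "HOL-Library.Function_Algebras" "HOL-Library.Extended_Nat"
begin

text \<open>Scalars: a type 'k of class real_normed_field (up to isometric isomorphism
  such a field is R or C).\<close>

definition seminorm :: "('k::real_normed_field \<Rightarrow> 'v::ab_group_add \<Rightarrow> 'v) \<Rightarrow> ('v \<Rightarrow> real) \<Rightarrow> bool" where
  "seminorm sc p \<longleftrightarrow> (\<forall>x. 0 \<le> p x) \<and> (\<forall>t x. p (sc t x) = norm t * p x)
      \<and> (\<forall>x y. p (x + y) \<le> p x + p y)"

definition seminorm_topology :: "'v::ab_group_add set \<Rightarrow> ('v \<Rightarrow> real) set \<Rightarrow> 'v topology" where
  "seminorm_topology V P = topology (\<lambda>U. U \<subseteq> V \<and> (\<forall>x\<in>U. \<exists>F e. finite F \<and> F \<subseteq> P \<and> e > 0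
       \<and> {y\<in>V. \<forall>p\<in>F. p (y - x) < e} \<subseteq> U))"

abbreviation lcs_top :: "('v::ab_group_add \<Rightarrow> real) set \<Rightarrow> 'v topology" where
  "lcs_top P \<equiv> seminorm_topology UNIV P"

definition lcs :: "('k::real_normed_field \<Rightarrow> 'v::ab_group_add \<Rightarrow> 'v) \<Rightarrow> ('v \<Rightarrow> real) set \<Rightarrow> bool" where
  "lcs sc P \<longleftrightarrow> vector_space sc \<and> (\<forall>p\<in>P. seminorm sc p) \<and> (\<forall>x. x \<noteq> 0 \<longrightarrow> (\<exists>p\<in>P. p x \<noteq> 0))"

definition bounded_sets :: "('v \<Rightarrow> real) set \<Rightarrow> 'v set set" where
  "bounded_sets P = {B. \<forall>p\<in>P. bdd_above (p ` B)}"

definition compact_sets :: "('v::ab_group_add \<Rightarrow> real) set \<Rightarrow> 'v set set" where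
  "compact_sets P = {K. compactin (lcs_top P) K}"

text \<open>b = True: bounded sets (topology of L(E,F)_b); b = False: compact sets (L(E,F)_c).\<close>
definition Sfam :: "bool \<Rightarrow> ('v::ab_group_add \<Rightarrow> real) set \<Rightarrow> 'v set set" where
  "Sfam b P = (if b then bounded_sets P else compact_sets P)"

definition Lspace :: "('k::real_normed_field \<Rightarrow> 'e::ab_group_add \<Rightarrow> 'e) \<Rightarrow> ('e \<Rightarrow> real) set
    \<Rightarrow> ('k \<Rightarrow> 'f::ab_group_add \<Rightarrow> 'f) \<Rightarrow> ('f \<Rightarrow> real) set \<Rightarrow> ('e \<Rightarrow> 'f) set" where
  "Lspace scE PE scF PF = {T. Vector_Spaces.linear scE scF T \<and> continuous_map (lcs_top PE) (lcs_top PF) T}"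

definition Lseminorms :: "bool \<Rightarrow> ('e::ab_group_add \<Rightarrow> real) set \<Rightarrow> ('f \<Rightarrow> real) set \<Rightarrow> (('e \<Rightarrow> 'f) \<Rightarrow> real) set" where
  "Lseminorms b PE PF = {(\<lambda>T. Sup (insert 0 ((\<lambda>x. q (T x)) ` B))) | B q. B \<in> Sfam b PE \<and> q \<in> PF}"

definition Ltop :: "bool \<Rightarrow> ('k::real_normed_field \<Rightarrow> 'e::ab_group_add \<Rightarrow> 'e) \<Rightarrow> ('e \<Rightarrow> real) set
    \<Rightarrow> ('k \<Rightarrow> 'f::ab_group_add \<Rightarrow> 'f) \<Rightarrow> ('f \<Rightarrow> real) set \<Rightarrow> ('e \<Rightarrow> 'f) topology" where
  "Ltop b scE PE scF PF = seminorm_topology (Lspace scE PE scF PF) (Lseminorms b PE PF)"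

definition Lscale :: "('k \<Rightarrow> 'f \<Rightarrow> 'f) \<Rightarrow> 'k \<Rightarrow> ('e \<Rightarrow> 'f) \<Rightarrow> ('e \<Rightarrow> 'f)" where
  "Lscale scF t T = (\<lambda>v. scF t (T v))"

definition kinf_space :: "'a topology \<Rightarrow> bool" where
  "kinf_space X \<longleftrightarrow> Hausdorff_space X \<and> (\<forall>n::nat. k_space (product_topology (\<lambda>_. X) {..<n}))"

text \<open>X^m is encoded as extensional functions on {..<m} (product topology). A pair (x,y) in
  X^m \<times> X^m is encoded as w in X^(2m) with x = first m coordinates, y = last m coordinates.
  Thus the map df : W \<times> X^m \<rightarrow> Y of Keller's definition becomes a map on a subset of X^(2m),
  and the recursive definition (C^(k+1) iff C^1 and df is C^k) can be stated uniformly.\<close>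

definition Xpow :: "('x::ab_group_add \<Rightarrow> real) set \<Rightarrow> nat \<Rightarrow> (nat \<Rightarrow> 'x) topology" where
  "Xpow PX m = product_topology (\<lambda>_. lcs_top PX) {..<m}"

definition dom2 :: "('x::ab_group_add \<Rightarrow> real) set \<Rightarrow> nat \<Rightarrow> (nat \<Rightarrow> 'x) set \<Rightarrow> (nat \<Rightarrow> 'x) set" where
  "dom2 PX m W = {w \<in> topspace (Xpow PX (2*m)). restrict w {..<m} \<in> W}"

definition shiftpt :: "('k \<Rightarrow> 'x::ab_group_add \<Rightarrow> 'x) \<Rightarrow> nat \<Rightarrow> (nat \<Rightarrow> 'x) \<Rightarrow> 'k \<Rightarrow> (nat \<Rightarrow> 'x)" where
  "shiftpt scX m w t = restrict (\<lambda>i. w i + scX t (w (m + i))) {..<m}"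

definition is_dirderiv :: "('k::real_normed_field \<Rightarrow> 'x::ab_group_add \<Rightarrow> 'x) \<Rightarrow> ('x \<Rightarrow> real) set
    \<Rightarrow> ('k \<Rightarrow> 'y::ab_group_add \<Rightarrow> 'y) \<Rightarrow> 'y topology \<Rightarrow> nat \<Rightarrow> (nat \<Rightarrow> 'x) set
    \<Rightarrow> ((nat \<Rightarrow> 'x) \<Rightarrow> 'y) \<Rightarrow> ((nat \<Rightarrow> 'x) \<Rightarrow> 'y) \<Rightarrow> bool" where
  "is_dirderiv scX PX scY TY m W phi psi \<longleftrightarrow>
     (\<forall>w \<in> dom2 PX m W. limitin TY
        (\<lambda>t. scY (inverse t) (phi (shiftpt scX m w t) - phi (restrict w {..<m}))) (psi w) (at 0))"

fun Ck :: "('k::real_normed_field \<Rightarrow> 'x::ab_group_add \<Rightarrow> 'x) \<Rightarrow> ('x \<Rightarrow> real) set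
    \<Rightarrow> ('k \<Rightarrow> 'y::ab_group_add \<Rightarrow> 'y) \<Rightarrow> 'y topology \<Rightarrow> nat \<Rightarrow> nat \<Rightarrow> (nat \<Rightarrow> 'x) set
    \<Rightarrow> ((nat \<Rightarrow> 'x) \<Rightarrow> 'y) \<Rightarrow> bool" where
  "Ck scX PX scY TY 0 m W phi = continuous_map (subtopology (Xpow PX m) W) TY phi"
| "Ck scX PX scY TY (Suc k) m W phi =
     (continuous_map (subtopology (Xpow PX m) W) TY phi \<and>
      (\<exists>psi. is_dirderiv scX PX scY TY m W phi psi \<and> Ck scX PX scY TY k (2*m) (dom2 PX m W) psi))"

text \<open>f : U \<rightarrow> Y is C^n (n \<in> N_0 \<union> {\<infinity>}); U \<subseteq> X is identified with a subset of X^1.\<close>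
definition Cn_map :: "('k::real_normed_field \<Rightarrow> 'x::ab_group_add \<Rightarrow> 'x) \<Rightarrow> ('x \<Rightarrow> real) set
    \<Rightarrow> ('k \<Rightarrow> 'y::ab_group_add \<Rightarrow> 'y) \<Rightarrow> 'y topology \<Rightarrow> enat \<Rightarrow> 'x set \<Rightarrow> ('x \<Rightarrow> 'y) \<Rightarrow> bool" where
  "Cn_map scX PX scY TY n U f \<longleftrightarrow>
     (let W = {w \<in> topspace (Xpow PX 1). w 0 \<in> U}; phi = (\<lambda>w. f (w 0)) in
      (case n of enat k \<Rightarrow> Ck scX PX scY TY k 1 W phi
               | \<infinity> \<Rightarrow> (\<forall>k. Ck scX PX scY TY k 1 W phi)))"

end

theory Submission
  imports Defs
begin

definition snt :: "'v::ab_group_add set \<Rightarrow> ('v \<Rightarrow> real) set \<Rightarrow> bool" where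
  "snt V P \<longleftrightarrow> (\<forall>x\<in>V. \<forall>y\<in>V. x + y \<in> V \<and> x - y \<in> V) \<and> (\<forall>p\<in>P. \<forall>x\<in>V. \<forall>y\<in>V. p (x + y) \<le> p x + p y) \<and> (\<forall>p\<in>P. p 0 = 0)
   \<and> (\<forall>x\<in>V. - x \<in> V) \<and> (\<forall>p\<in>P. \<forall>x\<in>V. p (- x) = p x)"

lemma istopology_snt:
  fixes V :: "'v::ab_group_add set" and P :: "('v \<Rightarrow> real) set"
  shows "istopology (\<lambda>U. U \<subseteq> V \<and> (\<forall>x\<in>U. \<exists>F e. finite F \<and> F \<subseteq> P \<and> e > 0
       \<and> {y\<in>V. \<forall>p\<in>F. p (y - x) < e} \<subseteq> U))"
  unfolding istopology_def
proof (intro conjI allI impI)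
  fix S T :: "'v set"
  assume S: "S \<subseteq> V \<and> (\<forall>x\<in>S. \<exists>F e. finite F \<and> F \<subseteq> P \<and> e > 0 \<and> {y\<in>V. \<forall>p\<in>F. p (y - x) < e} \<subseteq> S)"
    and T: "T \<subseteq> V \<and> (\<forall>x\<in>T. \<exists>F e. finite F \<and> F \<subseteq> P \<and> e > 0 \<and> {y\<in>V. \<forall>p\<in>F. p (y - x) < e} \<subseteq> T)"
  show "S \<inter> T \<subseteq> V" using S by auto
  show "\<forall>x\<in>S \<inter> T. \<exists>F e. finite F \<and> F \<subseteq> P \<and> e > 0 \<and> {y\<in>V. \<forall>p\<in>F. p (y - x) < e} \<subseteq> S \<inter> T"
  proof
    fix x assume "x \<in> S \<inter> T"
    then have xS: "x \<in> S" and xT: "x \<in> T" by auto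
    obtain F1 e1 where 1: "finite F1" "F1 \<subseteq> P" "e1 > 0" "{y\<in>V. \<forall>p\<in>F1. p (y - x) < e1} \<subseteq> S"
      using S xS by blast
    obtain F2 e2 where 2: "finite F2" "F2 \<subseteq> P" "e2 > 0" "{y\<in>V. \<forall>p\<in>F2. p (y - x) < e2} \<subseteq> T"
      using T xT by blast
    show "\<exists>F e. finite F \<and> F \<subseteq> P \<and> e > 0 \<and> {y\<in>V. \<forall>p\<in>F. p (y - x) < e} \<subseteq> S \<inter> T"
    proof (intro exI[of _ "F1 \<union> F2"] exI[of _ "min e1 e2"] conjI)
      show "{y\<in>V. \<forall>p\<in>F1 \<union> F2. p (y - x) < min e1 e2} \<subseteq> S \<inter> T"
        using 1(4) 2(4) by force
    qed (use 1 2 in auto)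
  qed
next
  fix K :: "'v set set"
  assume A: "\<forall>S\<in>K. S \<subseteq> V \<and> (\<forall>x\<in>S. \<exists>F e. finite F \<and> F \<subseteq> P \<and> e > 0 \<and> {y\<in>V. \<forall>p\<in>F. p (y - x) < e} \<subseteq> S)"
  then show "\<Union>K \<subseteq> V" by auto
  show "\<forall>x\<in>\<Union>K. \<exists>F e. finite F \<and> F \<subseteq> P \<and> e > 0 \<and> {y\<in>V. \<forall>p\<in>F. p (y - x) < e} \<subseteq> \<Union>K"
  proof
    fix x assume "x \<in> \<Union>K"
    then obtain S where "S \<in> K" "x \<in> S" by auto
    then show "\<exists>F e. finite F \<and> F \<subseteq> P \<and> e > 0 \<and> {y\<in>V. \<forall>p\<in>F. p (y - x) < e} \<subseteq> \<Union>K"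
    proof -
      have "S \<subseteq> \<Union>K" using \<open>S \<in> K\<close> by auto
      moreover obtain F e where "finite F \<and> F \<subseteq> P \<and> e > 0 \<and> {y\<in>V. \<forall>p\<in>F. p (y - x) < e} \<subseteq> S"
        using A \<open>S \<in> K\<close> \<open>x \<in> S\<close> by meson
      ultimately show ?thesis by blast
    qed
  qed
qed


lemma openin_snt:
  "openin (seminorm_topology V P) U \<longleftrightarrow> U \<subseteq> V \<and> (\<forall>x\<in>U. \<exists>F e. finite F \<and> F \<subseteq> P \<and> e > 0
       \<and> {y\<in>V. \<forall>p\<in>F. p (y - x) < e} \<subseteq> U)"
  unfolding seminorm_topology_def by (subst topology_inverse'[OF istopology_snt]) (rule refl)

lemma topspace_snt [simp]: "topspace (seminorm_topology V P) = V"
proof -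
  have "openin (seminorm_topology V P) V"
    unfolding openin_snt by (intro conjI ballI exI[of _ "{}"] exI[of _ 1]) auto
  moreover have "S \<subseteq> V" if "openin (seminorm_topology V P) S" for S
    using that unfolding openin_snt by blast
  ultimately show ?thesis by (metis openin_subset openin_topspace subset_antisym)
qed

lemma ball_open_snt:
  fixes e :: real
  assumes "snt V P" "p \<in> P" "x \<in> V" 
  shows "openin (seminorm_topology V P) {y\<in>V. p (y - x) < e}"
  unfolding openin_snt
proof (intro conjI ballI)
  fix z assume z: "z \<in> {y\<in>V. p (y - x) < e}"
  show "\<exists>F d. finite F \<and> F \<subseteq> P \<and> d > 0 \<and> {y\<in>V. \<forall>q\<in>F. q (y - z) < d} \<subseteq> {y\<in>V. p (y - x) < e}"
  proof (intro exI[of _ "{p}"] exI[of _ "e - p (z - x)"] conjI)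
    show "finite {p}" by simp
    show "{p} \<subseteq> P" using assms by simp
    show "e - p (z - x) > 0" using z by simp
    show "{y\<in>V. \<forall>q\<in>{p}. q (y - z) < e - p (z - x)} \<subseteq> {y\<in>V. p (y - x) < e}"
    proof clarsimp
      fix y assume y: "y \<in> V" "p (y - z) < e - p (z - x)"
      have "p (y - x) = p ((y - z) + (z - x))" by (simp add: algebra_simps)
      also have "\<dots> \<le> p (y - z) + p (z - x)"
      proof -
        have "y - z \<in> V" "z - x \<in> V" using assms z y unfolding snt_def by auto
        then show ?thesis using assms unfolding snt_def by blast
      qed
      finally show "p (y - x) < e" using y by linarith
    qed
  qed
qed auto

lemma limitin_snt:
  assumes "snt V P"
  shows "limitin (seminorm_topology V P) f l F \<longleftrightarrow> l \<in> V \<and> eventually (\<lambda>x. f x \<in> V) F \<and>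
     (\<forall>p\<in>P. \<forall>e>0. eventually (\<lambda>x. p (f x - l) < e) F)"
proof
  assume L: "limitin (seminorm_topology V P) f l F"
  then have l: "l \<in> V" using limitin_topspace by fastforce
  have "eventually (\<lambda>x. f x \<in> V) F" using L l unfolding limitin_def
    by (metis openin_topspace topspace_snt)
  moreover have "eventually (\<lambda>x. p (f x - l) < e) F" if "p \<in> P" "e > 0" for p e
  proof -
    have "eventually (\<lambda>x. f x \<in> {y\<in>V. p (y - l) < e}) F"
    proof -
      have "l \<in> {y\<in>V. p (y - l) < e}" using l that assms unfolding snt_def by auto
      then show ?thesis using L ball_open_snt[OF assms that(1) l, of e] unfolding limitin_def by blast
    qed
    then show ?thesis by (rule eventually_mono) auto
  qed
  ultimately show "l \<in> V \<and> eventually (\<lambda>x. f x \<in> V) F \<and> (\<forall>p\<in>P. \<forall>e>0. eventually (\<lambda>x. p (f x - l) < e) F)"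
    using l by blast
next
  assume R: "l \<in> V \<and> eventually (\<lambda>x. f x \<in> V) F \<and> (\<forall>p\<in>P. \<forall>e>0. eventually (\<lambda>x. p (f x - l) < e) F)"
  show "limitin (seminorm_topology V P) f l F"
    unfolding limitin_def
  proof (intro conjI allI impI)
    show "l \<in> topspace (seminorm_topology V P)" using R by simp
    fix U assume U: "openin (seminorm_topology V P) U \<and> l \<in> U"
    then obtain G e where G: "finite G" "G \<subseteq> P" "e > 0" "{y\<in>V. \<forall>p\<in>G. p (y - l) < e} \<subseteq> U"
      unfolding openin_snt by blast
    have "eventually (\<lambda>x. \<forall>p\<in>G. p (f x - l) < e) F"
      using G R by (subst eventually_ball_finite_distrib) auto
    with R have "eventually (\<lambda>x. f x \<in> V \<and> (\<forall>p\<in>G. p (f x - l) < e)) F"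
      by (simp add: eventually_conj_iff)
    then show "eventually (\<lambda>x. f x \<in> U) F"
      by (rule eventually_mono) (use G in auto)
  qed
qed


lemma snt_V: assumes "snt V P" "x \<in> V" "y \<in> V"
  shows "x + y \<in> V" "x - y \<in> V" "- x \<in> V"
  using assms unfolding snt_def by auto

lemma snt_P: assumes "snt V P" "p \<in> P" "x \<in> V" "y \<in> V"
  shows "p (x + y) \<le> p x + p y" "p 0 = 0" "p (- x) = p x"
  using assms unfolding snt_def by auto

lemma snt_diff_le: assumes "snt V P" "p \<in> P" "x \<in> V" "y \<in> V" "z \<in> V"
  shows "p (x - z) \<le> p (x - y) + p (y - z)"
proof -
  have "x - z = (x - y) + (y - z)" by simp
  then show ?thesis using snt_P(1)[OF assms(1,2) snt_V(2)[OF assms(1,3,4)] snt_V(2)[OF assms(1,4,5)]]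
    by simp
qed

lemma limitin_add_snt:
  assumes S: "snt V P" and f: "limitin (seminorm_topology V P) f l F"
    and g: "limitin (seminorm_topology V P) g m F"
  shows "limitin (seminorm_topology V P) (\<lambda>x. f x + g x) (l + m) F"
proof -
  have f': "l \<in> V" "eventually (\<lambda>x. f x \<in> V) F" "\<And>p e. p \<in> P \<Longrightarrow> e > 0 \<Longrightarrow> eventually (\<lambda>x. p (f x - l) < e) F"
    using f unfolding limitin_snt[OF S] by auto
  have g': "m \<in> V" "eventually (\<lambda>x. g x \<in> V) F" "\<And>p e. p \<in> P \<Longrightarrow> e > 0 \<Longrightarrow> eventually (\<lambda>x. p (g x - m) < e) F"
    using g unfolding limitin_snt[OF S] by auto
  show ?thesis unfolding limitin_snt[OF S]
  proof (intro conjI ballI allI impI)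
    show "l + m \<in> V" using S f'(1) g'(1) by (rule snt_V)
    show "eventually (\<lambda>x. f x + g x \<in> V) F"
      using f'(2) g'(2) by eventually_elim (use S snt_V in blast)
    fix p :: "'a \<Rightarrow> real" and e :: real assume p: "p \<in> P" and e: "e > 0"
    have "eventually (\<lambda>x. f x \<in> V \<and> g x \<in> V \<and> p (f x - l) < e/2 \<and> p (g x - m) < e/2) F"
      using f'(2) g'(2) f'(3)[OF p, of "e/2"] g'(3)[OF p, of "e/2"] e
      by (auto simp: eventually_conj_iff)
    then show "eventually (\<lambda>x. p (f x + g x - (l + m)) < e) F"
    proof (rule eventually_mono)
      fix x assume x: "f x \<in> V \<and> g x \<in> V \<and> p (f x - l) < e/2 \<and> p (g x - m) < e/2"
      have "p (f x + g x - (l + m)) = p ((f x - l) + (g x - m))" by (rule arg_cong[where f=p]) simp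
      moreover have "p ((f x - l) + (g x - m)) \<le> p (f x - l) + p (g x - m)"
        using snt_P(1)[OF S p snt_V(2)[OF S _ f'(1)] snt_V(2)[OF S _ g'(1)]] x by blast
      ultimately show "p (f x + g x - (l + m)) < e" using x by linarith
    qed
  qed
qed

lemma limitin_minus_snt:
  assumes S: "snt V P" and f: "limitin (seminorm_topology V P) f l F"
  shows "limitin (seminorm_topology V P) (\<lambda>x. - f x) (- l) F"
proof -
  have f': "l \<in> V" "eventually (\<lambda>x. f x \<in> V) F" "\<And>p e. p \<in> P \<Longrightarrow> e > 0 \<Longrightarrow> eventually (\<lambda>x. p (f x - l) < e) F"
    using f unfolding limitin_snt[OF S] by auto
  show ?thesis unfolding limitin_snt[OF S]
  proof (intro conjI ballI allI impI)
    show "- l \<in> V" using snt_V(3)[OF S f'(1) f'(1)] .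
    show "eventually (\<lambda>x. - f x \<in> V) F"
      using f'(2) by eventually_elim (use S snt_V in blast)
    fix p :: "'a \<Rightarrow> real" and e :: real assume p: "p \<in> P" and e: "e > 0"
    show "eventually (\<lambda>x. p (- f x - - l) < e) F"
      using f'(2) f'(3)[OF p e]
    proof eventually_elim
      case (elim x)
      have "- f x - - l = - (f x - l)" by simp
      then show ?case using snt_P(3)[OF S p snt_V(2)[OF S elim(1) f'(1)] f'(1)] elim by simp
    qed
  qed
qed

lemma limitin_diff_snt:
  assumes S: "snt V P" and f: "limitin (seminorm_topology V P) f l F"
    and g: "limitin (seminorm_topology V P) g m F"
  shows "limitin (seminorm_topology V P) (\<lambda>x. f x - g x) (l - m) F"
  using limitin_add_snt[OF S f limitin_minus_snt[OF S g]] by simp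

lemma ball0_open_snt:
  fixes r :: real
  assumes S: "snt V P" and p: "p \<in> P"
  shows "openin (seminorm_topology V P) {y\<in>V. p y < r}"
  unfolding openin_snt
proof (intro conjI ballI)
  fix z assume z: "z \<in> {y\<in>V. p y < r}"
  show "\<exists>F d. finite F \<and> F \<subseteq> P \<and> d > 0 \<and> {y\<in>V. \<forall>q\<in>F. q (y - z) < d} \<subseteq> {y\<in>V. p y < r}"
  proof (intro exI[of _ "{p}"] exI[of _ "r - p z"] conjI)
    show "finite {p}" by simp
    show "{p} \<subseteq> P" using p by simp
    show "r - p z > 0" using z by simp
    show "{y\<in>V. \<forall>q\<in>{p}. q (y - z) < r - p z} \<subseteq> {y\<in>V. p y < r}"
    proof clarsimp
      fix y assume y: "y \<in> V" "p (y - z) < r - p z"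
      have "p y = p ((y - z) + z)" by simp
      also have "\<dots> \<le> p (y - z) + p z"
        using snt_P(1)[OF S p snt_V(2)[OF S y(1)] ] z by blast
      finally show "p y < r" using y by linarith
    qed
  qed
qed auto

lemma compact_bdd_snt:
  assumes S: "snt V P" and K: "compactin (seminorm_topology V P) K" and p: "p \<in> P"
  shows "bdd_above (p ` K)"
proof -
  let ?U = "(\<lambda>n::nat. {y\<in>V. p y < real n}) ` UNIV"
  have KV: "K \<subseteq> V" using K compactin_subset_topspace by fastforce
  have "\<forall>U\<in>?U. openin (seminorm_topology V P) U" using ball0_open_snt[OF S p] by blast
  moreover have "K \<subseteq> \<Union>?U"
  proof
    fix y assume "y \<in> K"
    moreover obtain n :: nat where "p y < real n" using reals_Archimedean2 by blast
    ultimately show "y \<in> \<Union>?U" using KV by blast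
  qed
  ultimately obtain F where F: "finite F" "F \<subseteq> ?U" "K \<subseteq> \<Union>F"
    using K unfolding compactin_def by meson
  then obtain N where N: "finite N" "F = (\<lambda>n::nat. {y\<in>V. p y < real n}) ` N"
    using finite_subset_image[OF F(1) F(2)] by blast
  have "p y \<le> real (Max (insert 0 N))" if "y \<in> K" for y
  proof -
    have "y \<in> \<Union>F" using F(3) that by auto
    then obtain n where "n \<in> N" "y \<in> {y\<in>V. p y < real n}" using N by auto
    then have "n \<le> Max (insert 0 N)" using N(1) by simp
    then show ?thesis using \<open>y \<in> {y\<in>V. p y < real n}\<close> by auto
  qed
  then show ?thesis by (intro bdd_aboveI2) 
qed

section \<open>Locally convex spaces\<close>

lemma lcs_module: "lcs sc P \<Longrightarrow> module sc"
  unfolding lcs_def using module_iff_vector_space by blast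

lemma lcs_seminorm: assumes "lcs sc P" "p \<in> P"
  shows "p x \<ge> 0" "p (sc t x) = norm t * p x" "p (x + y) \<le> p x + p y"
  using assms unfolding lcs_def seminorm_def by auto

lemma lcs_p0: assumes "lcs sc P" "p \<in> P" shows "p 0 = 0"
proof -
  have "p (sc 0 0) = norm (0::'a) * p 0" using lcs_seminorm(2)[OF assms] .
  then show ?thesis using module.scale_zero_left[OF lcs_module[OF assms(1)]] by simp
qed

lemma lcs_pminus: assumes "lcs sc P" "p \<in> P" shows "p (- x) = p x"
proof -
  have "sc (-1) x = - sc 1 x" using module.scale_minus_left[OF lcs_module[OF assms(1)]] by blast
  then have "- x = sc (-1) x" using module.scale_one[OF lcs_module[OF assms(1)]] by simp
  then show ?thesis using lcs_seminorm(2)[OF assms, of "-1" x] by simp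
qed

lemma snt_lcs: "lcs sc P \<Longrightarrow> snt UNIV P"
  unfolding snt_def using lcs_seminorm(3) lcs_p0 lcs_pminus by blast

lemma continuous_map_add_lcs:
  assumes "lcs sc P" "continuous_map X (lcs_top P) f" "continuous_map X (lcs_top P) g"
  shows "continuous_map X (lcs_top P) (\<lambda>x. f x + g x)"
  using assms(2,3) unfolding continuous_map_atin
  using limitin_add_snt[OF snt_lcs[OF assms(1)]] by blast

lemma continuous_map_diff_lcs:
  assumes "lcs sc P" "continuous_map X (lcs_top P) f" "continuous_map X (lcs_top P) g"
  shows "continuous_map X (lcs_top P) (\<lambda>x. f x - g x)"
  using assms(2,3) unfolding continuous_map_atin
  using limitin_diff_snt[OF snt_lcs[OF assms(1)]] by blast


section \<open>Spaces of operators\<close>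

definition lsn :: "'e set \<Rightarrow> ('f \<Rightarrow> real) \<Rightarrow> ('e \<Rightarrow> 'f) \<Rightarrow> real" where
  "lsn M q T = Sup (insert 0 ((\<lambda>x. q (T x)) ` M))"

lemma Lseminorms_eq: "Lseminorms b PE PF = {lsn M q | M q. M \<in> Sfam b PE \<and> q \<in> PF}"
  unfolding Lseminorms_def lsn_def by simp

lemma Sfam_bdd: assumes "lcs sc P" "M \<in> Sfam b P" "p \<in> P" shows "bdd_above (p ` M)"
proof (cases b)
  case True then show ?thesis using assms unfolding Sfam_def bounded_sets_def by auto
next
  case False
  then have "compactin (lcs_top P) M" using assms unfolding Sfam_def compact_sets_def by auto
  then show ?thesis by (rule compact_bdd_snt[OF snt_lcs[OF assms(1)] _ assms(3)])
qed

lemma LspaceD: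
  assumes "T \<in> Lspace scE PE scF PF"
  shows "T (x + y) = T x + T y" "T (scE c x) = scF c (T x)"
    "continuous_map (lcs_top PE) (lcs_top PF) T" "Vector_Spaces.linear scE scF T"
  using assms unfolding Lspace_def Vector_Spaces.linear_iff by auto

lemma Lspace_zero: assumes "T \<in> Lspace scE PE scF PF" shows "T 0 = 0"
proof -
  have "Modules.additive T" unfolding Modules.additive_def using LspaceD(1)[OF assms] by blast
  then show ?thesis by (rule Modules.additive.zero)
qed

lemma Lspace_diff: assumes "T \<in> Lspace scE PE scF PF" shows "T (x - y) = T x - T y"
proof -
  have "Modules.additive T" unfolding Modules.additive_def using LspaceD(1)[OF assms] by blast
  then show ?thesis by (rule Modules.additive.diff)
qed

lemma lin_bound:
  fixes scE :: "'k::real_normed_field \<Rightarrow> 'e::ab_group_add \<Rightarrow> 'e" and scF :: "'k \<Rightarrow> 'f::ab_group_add \<Rightarrow> 'f"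
  assumes E: "lcs scE PE" and F: "lcs scF PF" and T: "T \<in> Lspace scE PE scF PF" and q: "q \<in> PF"
  shows "\<exists>G C. finite G \<and> G \<subseteq> PE \<and> 0 \<le> C \<and> (\<forall>v. q (T v) \<le> C * (\<Sum>p\<in>G. p v))"
proof -
  have cont: "continuous_map (lcs_top PE) (lcs_top PF) T" using LspaceD(3)[OF T] .
  have O: "openin (lcs_top PF) {y\<in>UNIV. q (y - 0) < 1}"
    using ball_open_snt[OF snt_lcs[OF F] q, of 0 1] by simp
  have "openin (lcs_top PE) {v \<in> topspace (lcs_top PE). T v \<in> {y\<in>UNIV. q (y - 0) < 1}}"
    using openin_continuous_map_preimage[OF cont O] .
  then have O2: "openin (lcs_top PE) {v. q (T v) < 1}" by simp
  have "q (T 0) < 1" using Lspace_zero[OF T] lcs_p0[OF F q] by simp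
  then obtain G e where G: "finite G" "G \<subseteq> PE" "e > 0" "{y\<in>UNIV. \<forall>p\<in>G. p (y - 0) < e} \<subseteq> {v. q (T v) < 1}"
  proof -
    have A: "\<forall>x\<in>{v. q (T v) < 1}. \<exists>F e. finite F \<and> F \<subseteq> PE \<and> e > 0
       \<and> {y\<in>UNIV. \<forall>p\<in>F. p (y - x) < e} \<subseteq> {v. q (T v) < 1}"
      using O2 unfolding openin_snt by (elim conjE)
    have "\<exists>F e. finite F \<and> F \<subseteq> PE \<and> e > 0
       \<and> {y\<in>UNIV. \<forall>p\<in>F. p (y - 0) < e} \<subseteq> {v. q (T v) < 1}"
      using bspec[OF A, of 0] \<open>q (T 0) < 1\<close> by simp
    then show ?thesis using that by (elim exE conjE)
  qed
  have key: "q (T y) < 1" if "\<And>p. p \<in> G \<Longrightarrow> p y < e" for y using G(4) that by auto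
  show ?thesis
  proof (intro exI[of _ G] exI[of _ "2/e"] conjI allI)
    show "finite G" "G \<subseteq> PE" using G by auto
    show "0 \<le> 2/e" using G by simp
    fix v
    define s where "s = (\<Sum>p\<in>G. p v)"
    have pnn: "p v \<ge> 0" if "p \<in> G" for p using lcs_seminorm(1)[OF E] G(2) that by blast
    have s0: "s \<ge> 0" unfolding s_def using pnn by (simp add: sum_nonneg)
    have ple: "p v \<le> s" if "p \<in> G" for p unfolding s_def using pnn that G(1) by (intro member_le_sum) auto
    have psc: "p (scE (of_real c) v) = \<bar>c\<bar> * p v" if "p \<in> G" for p c
      using lcs_seminorm(2)[OF E, of p "of_real c" v] G(2) that by auto
    have qsc: "q (T (scE (of_real c) v)) = \<bar>c\<bar> * q (T v)" for c
      using lcs_seminorm(2)[OF F q, of "of_real c" "T v"] LspaceD(2)[OF T] by auto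
    have qnn: "q (T v) \<ge> 0" using lcs_seminorm(1)[OF F q] by blast
    show "q (T v) \<le> 2/e * s"
    proof (cases "s > 0")
      case True
      define c where "c = e / (2 * s)"
      have c0: "c > 0" unfolding c_def using True G(3) by simp
      have "q (T (scE (of_real c) v)) < 1"
      proof (rule key)
        fix p assume p: "p \<in> G"
        have "c * p v \<le> c * s" using ple[OF p] c0 by (simp add: mult_left_mono)
        also have "c * s = e / 2" unfolding c_def using True by simp
        finally show "p (scE (of_real c) v) < e" using psc[OF p, of c] c0 G(3) by simp
      qed
      then have "c * q (T v) < 1" using qsc[of c] c0 by simp
      then have "q (T v) < 1 / c" using c0 by (simp add: field_simps)
      also have "1 / c = 2 / e * s" unfolding c_def using True G(3) by simp
      finally show ?thesis by simp
    next
      case False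
      then have "s = 0" using s0 by simp
      then have pz: "p v = 0" if "p \<in> G" for p using ple[OF that] pnn[OF that] by simp
      have "q (T v) \<le> 0"
      proof (rule ccontr)
        assume "\<not> q (T v) \<le> 0"
        then have pos: "q (T v) > 0" by simp
        have "q (T (scE (of_real (2 / q (T v))) v)) < 1"
        proof (rule key)
          fix p assume "p \<in> G"
          then show "p (scE (of_real (2 / q (T v))) v) < e"
            using psc[OF \<open>p\<in>G\<close>, of "2 / q (T v)"] pz[OF \<open>p\<in>G\<close>] G(3) by simp
        qed
        then show False using qsc[of "2 / q (T v)"] pos by simp
      qed
      then show ?thesis using \<open>s = 0\<close> by simp
    qed
  qed
qed

lemma Lspace_bdd:
  fixes scE :: "'k::real_normed_field \<Rightarrow> 'e::ab_group_add \<Rightarrow> 'e" and scF :: "'k \<Rightarrow> 'f::ab_group_add \<Rightarrow> 'f"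
  assumes E: "lcs scE PE" and F: "lcs scF PF" and T: "T \<in> Lspace scE PE scF PF" and q: "q \<in> PF"
    and M: "M \<in> Sfam b PE"
  shows "bdd_above ((\<lambda>x. q (T x)) ` M)"
proof -
  obtain G C where G: "finite G" "G \<subseteq> PE" "0 \<le> C" "\<And>v. q (T v) \<le> C * (\<Sum>p\<in>G. p v)"
    using lin_bound[OF E F T q] by blast
  have "\<forall>p\<in>G. \<exists>B. \<forall>x\<in>M. p x \<le> B" using Sfam_bdd[OF E M] G(2) unfolding bdd_above_def by blast
  then obtain B where B: "\<And>p x. p \<in> G \<Longrightarrow> x \<in> M \<Longrightarrow> p x \<le> B p" by metis
  have "q (T x) \<le> C * (\<Sum>p\<in>G. B p)" if "x \<in> M" for x
  proof -
    have "(\<Sum>p\<in>G. p x) \<le> (\<Sum>p\<in>G. B p)" using B that by (intro sum_mono) auto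
    then show ?thesis using G(4)[of x] G(3) mult_left_mono by (metis order_trans)
  qed
  then show ?thesis by (intro bdd_aboveI2)
qed

lemma lsn_upper:
  assumes "bdd_above ((\<lambda>x. q (T x)) ` M)" "x \<in> M"
  shows "q (T x) \<le> lsn M q T"
  unfolding lsn_def using assms by (intro cSup_upper) auto

lemma lsn_nonneg:
  assumes "bdd_above ((\<lambda>x. q (T x)) ` M)"
  shows "0 \<le> lsn M q T"
  unfolding lsn_def using assms by (intro cSup_upper) auto

lemma lsn_le:
  assumes "\<And>x. x \<in> M \<Longrightarrow> q (T x) \<le> c" "0 \<le> c"
  shows "lsn M q T \<le> c"
  unfolding lsn_def using assms by (intro cSup_least) auto

lemma Lspace_add:
  assumes E: "lcs scE PE" and F: "lcs scF PF" and T: "T \<in> Lspace scE PE scF PF" and S: "S \<in> Lspace scE PE scF PF"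
  shows "(\<lambda>x. T x + S x) \<in> Lspace scE PE scF PF"
proof -
  have "Vector_Spaces.linear scE scF (\<lambda>x. T x + S x)"
    using LspaceD(1,2)[OF T] LspaceD(1,2)[OF S] E F module.scale_right_distrib[OF lcs_module[OF F]]
    unfolding Vector_Spaces.linear_iff lcs_def by (simp add: algebra_simps)
  moreover have "continuous_map (lcs_top PE) (lcs_top PF) (\<lambda>x. T x + S x)"
    using continuous_map_add_lcs[OF F LspaceD(3)[OF T] LspaceD(3)[OF S]] .
  ultimately show ?thesis unfolding Lspace_def by blast
qed

lemma Lspace_minus:
  assumes E: "lcs scE PE" and F: "lcs scF PF" and T: "T \<in> Lspace scE PE scF PF"
  shows "(\<lambda>x. - T x) \<in> Lspace scE PE scF PF"
proof -
  have "Vector_Spaces.linear scE scF (\<lambda>x. - T x)"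
    using LspaceD(1,2)[OF T] E F module.scale_minus_right[OF lcs_module[OF F]]
    unfolding Vector_Spaces.linear_iff lcs_def by (simp add: algebra_simps)
  moreover have "continuous_map (lcs_top PE) (lcs_top PF) (\<lambda>x. - T x)"
    using continuous_map_diff_lcs[OF F continuous_map_const[THEN iffD2] LspaceD(3)[OF T], of 0] by simp
  ultimately show ?thesis unfolding Lspace_def by blast
qed

lemma Lspace_comp:
  assumes "T \<in> Lspace scE PE scF PF" "S \<in> Lspace scF PF scG PG"
  shows "S \<circ> T \<in> Lspace scE PE scG PG"
  using assms unfolding Lspace_def
  using Vector_Spaces.linear_compose continuous_map_compose by blast

lemma Lspace_plus_fun:
  assumes E: "lcs scE PE" and F: "lcs scF PF" and T: "T \<in> Lspace scE PE scF PF" and S: "S \<in> Lspace scE PE scF PF"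
  shows "T + S \<in> Lspace scE PE scF PF" "T - S \<in> Lspace scE PE scF PF" "- T \<in> Lspace scE PE scF PF"
proof -
  show "T + S \<in> Lspace scE PE scF PF" using Lspace_add[OF E F T S] by (simp add: plus_fun_def)
  show "- T \<in> Lspace scE PE scF PF" using Lspace_minus[OF E F T] by (simp add: fun_Compl_def)
  show "T - S \<in> Lspace scE PE scF PF" using Lspace_add[OF E F T Lspace_minus[OF E F S]]
    by (simp add: fun_diff_def)
qed

lemma snt_L:
  fixes scE :: "'k::real_normed_field \<Rightarrow> 'e::ab_group_add \<Rightarrow> 'e" and scF :: "'k \<Rightarrow> 'f::ab_group_add \<Rightarrow> 'f"
  assumes E: "lcs scE PE" and F: "lcs scF PF"
  shows "snt (Lspace scE PE scF PF) (Lseminorms b PE PF)"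
  unfolding snt_def Lseminorms_eq
proof (intro conjI ballI)
  fix x y assume x: "x \<in> Lspace scE PE scF PF" and y: "y \<in> Lspace scE PE scF PF"
  show "x + y \<in> Lspace scE PE scF PF" "x - y \<in> Lspace scE PE scF PF" using Lspace_plus_fun[OF E F x y] by auto
next
  fix x assume x: "x \<in> Lspace scE PE scF PF"
  show "- x \<in> Lspace scE PE scF PF" using Lspace_plus_fun[OF E F x x] by auto
next
  fix p assume "p \<in> {lsn M q |M q. M \<in> Sfam b PE \<and> q \<in> PF}"
  then obtain M q where p: "p = lsn M q" and M: "M \<in> Sfam b PE" and q: "q \<in> PF" by blast
  {
    fix x y assume x: "x \<in> Lspace scE PE scF PF" and y: "y \<in> Lspace scE PE scF PF"
    have bx: "bdd_above ((\<lambda>v. q (x v)) ` M)" using Lspace_bdd[OF E F x q M] .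
    have by': "bdd_above ((\<lambda>v. q (y v)) ` M)" using Lspace_bdd[OF E F y q M] .
    show "p (x + y) \<le> p x + p y" unfolding p
    proof (rule lsn_le)
      fix v assume v: "v \<in> M"
      have "q ((x + y) v) \<le> q (x v) + q (y v)" using lcs_seminorm(3)[OF F q] by simp
      also have "\<dots> \<le> lsn M q x + lsn M q y" using lsn_upper[where q=q and T=x and M=M, OF bx v] lsn_upper[where q=q and T=y and M=M, OF by' v] by simp
      finally show "q ((x + y) v) \<le> lsn M q x + lsn M q y" .
    qed (use lsn_nonneg[where q=q and T=x and M=M, OF bx] lsn_nonneg[where q=q and T=y and M=M, OF by'] in simp)
  }
  show "p 0 = 0" unfolding p lsn_def using lcs_p0[OF F q] by (simp add: image_constant_conv)
  {
    fix x assume x: "x \<in> Lspace scE PE scF PF"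
    show "p (- x) = p x" unfolding p lsn_def using lcs_pminus[OF F q] by simp
  }
qed


lemma limitin_L:
  fixes scE :: "'k::real_normed_field \<Rightarrow> 'e::ab_group_add \<Rightarrow> 'e" and scF :: "'k \<Rightarrow> 'f::ab_group_add \<Rightarrow> 'f"
  assumes E: "lcs scE PE" and F: "lcs scF PF"
  shows "limitin (Ltop b scE PE scF PF) f l Fi \<longleftrightarrow> l \<in> Lspace scE PE scF PF \<and>
     eventually (\<lambda>x. f x \<in> Lspace scE PE scF PF) Fi \<and>
     (\<forall>M\<in>Sfam b PE. \<forall>q\<in>PF. \<forall>e>0. eventually (\<lambda>x. lsn M q (f x - l) < e) Fi)"
proof -
  have eq: "\<And>P. (\<forall>p\<in>{lsn M q |M q. M \<in> Sfam b PE \<and> q \<in> PF}. P p) \<longleftrightarrow> (\<forall>M\<in>Sfam b PE. \<forall>q\<in>PF. P (lsn M q))"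
    by blast
  show ?thesis unfolding Ltop_def unfolding limitin_snt[OF snt_L[OF E F]] unfolding Lseminorms_eq eq ..
qed

lemma comp_limit:
  fixes scE :: "'k::real_normed_field \<Rightarrow> 'e::ab_group_add \<Rightarrow> 'e" and scF :: "'k \<Rightarrow> 'f::ab_group_add \<Rightarrow> 'f"
    and scG :: "'k \<Rightarrow> 'g::ab_group_add \<Rightarrow> 'g"
  assumes E: "lcs scE PE" and F: "lcs scF PF" and G: "lcs scG PG"
    and A: "limitin (Ltop b scF PF scG PG) A A0 Fi"
    and B: "limitin (Ltop b scE PE scF PF) B B0 Fi"
    and N: "\<forall>M\<in>Sfam b PE. \<exists>N\<in>Sfam b PF. eventually (\<lambda>i. \<forall>v\<in>M. B i v \<in> N) Fi"
  shows "limitin (Ltop b scE PE scG PG) (\<lambda>i. A i \<circ> B i) (A0 \<circ> B0) Fi"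
proof -
  have A': "A0 \<in> Lspace scF PF scG PG" "eventually (\<lambda>x. A x \<in> Lspace scF PF scG PG) Fi"
    "\<And>M q e. M \<in> Sfam b PF \<Longrightarrow> q \<in> PG \<Longrightarrow> e > 0 \<Longrightarrow> eventually (\<lambda>x. lsn M q (A x - A0) < e) Fi"
    using A unfolding limitin_L[OF F G] by auto
  have B': "B0 \<in> Lspace scE PE scF PF" "eventually (\<lambda>x. B x \<in> Lspace scE PE scF PF) Fi"
    "\<And>M q e. M \<in> Sfam b PE \<Longrightarrow> q \<in> PF \<Longrightarrow> e > 0 \<Longrightarrow> eventually (\<lambda>x. lsn M q (B x - B0) < e) Fi"
    using B unfolding limitin_L[OF E F] by auto
  show ?thesis unfolding limitin_L[OF E G]
  proof (intro conjI ballI allI impI)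
    show "A0 \<circ> B0 \<in> Lspace scE PE scG PG" using Lspace_comp[OF B'(1) A'(1)] .
    show "eventually (\<lambda>x. A x \<circ> B x \<in> Lspace scE PE scG PG) Fi"
      using A'(2) B'(2) by eventually_elim (rule Lspace_comp)
    fix M r and e :: real assume M: "M \<in> Sfam b PE" and r: "r \<in> PG" and e: "e > 0"
    obtain NN where NN: "NN \<in> Sfam b PF" "eventually (\<lambda>i. \<forall>v\<in>M. B i v \<in> NN) Fi" using N M by blast
    obtain GG C where GG: "finite GG" "GG \<subseteq> PF" "0 \<le> C" "\<And>v. r (A0 v) \<le> C * (\<Sum>p\<in>GG. p v)"
      using lin_bound[OF F G A'(1) r] by blast
    define K where "K = (C + 1) * (real (card GG) + 1)"
    have K0: "K > 0" unfolding K_def using GG(3) by (intro mult_pos_pos) auto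
    define \<delta> where "\<delta> = e / (2 * K)"
    have \<delta>0: "\<delta> > 0" unfolding \<delta>_def using e K0 by simp
    have \<delta>C: "C * (real (card GG) * \<delta>) \<le> e / 2"
    proof -
      have "C * real (card GG) \<le> (C + 1) * (real (card GG) + 1)" using GG(3)
        by (simp add: algebra_simps)
      then have "C * real (card GG) * \<delta> \<le> (C + 1) * (real (card GG) + 1) * \<delta>"
        using \<delta>0 by (intro mult_right_mono) auto
      also have "(C + 1) * (real (card GG) + 1) * \<delta> = e / 2"
        using K0 unfolding \<delta>_def K_def[symmetric] by simp
      finally show ?thesis by (simp add: mult.assoc)
    qed
    have ev: "eventually (\<lambda>i. A i \<in> Lspace scF PF scG PG \<and> B i \<in> Lspace scE PE scF PF \<and> (\<forall>v\<in>M. B i v \<in> NN)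
       \<and> lsn NN r (A i - A0) < e/2 \<and> (\<forall>q\<in>GG. lsn M q (B i - B0) < \<delta>)) Fi"
    proof -
      have "eventually (\<lambda>i. \<forall>q\<in>GG. lsn M q (B i - B0) < \<delta>) Fi"
      proof (rule eventually_ball_finite[OF GG(1)], rule ballI)
        fix q assume "q \<in> GG"
        then show "eventually (\<lambda>i. lsn M q (B i - B0) < \<delta>) Fi" using B'(3)[OF M _ \<delta>0] GG(2) by blast
      qed
      moreover have "eventually (\<lambda>i. lsn NN r (A i - A0) < e/2) Fi" using A'(3)[OF NN(1) r, of "e/2"] e by simp
      ultimately show ?thesis using A'(2) B'(2) NN(2) by (simp add: eventually_conj_iff)
    qed
    show "eventually (\<lambda>i. lsn M r ((A i \<circ> B i) - (A0 \<circ> B0)) < e) Fi"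
      using ev
    proof eventually_elim
      case (elim i)
      have Ai: "A i \<in> Lspace scF PF scG PG" and Bi: "B i \<in> Lspace scE PE scF PF" and BN: "\<And>v. v \<in> M \<Longrightarrow> B i v \<in> NN"
        and a1: "lsn NN r (A i - A0) < e/2" and a2: "\<And>q. q \<in> GG \<Longrightarrow> lsn M q (B i - B0) < \<delta>"
        using elim by auto
      have AD: "A i - A0 \<in> Lspace scF PF scG PG" using Lspace_plus_fun(2)[OF F G Ai A'(1)] .
      have BD: "B i - B0 \<in> Lspace scE PE scF PF" using Lspace_plus_fun(2)[OF E F Bi B'(1)] .
      have bA: "bdd_above ((\<lambda>x. r ((A i - A0) x)) ` NN)" using Lspace_bdd[OF F G AD r NN(1)] .
      have bB: "bdd_above ((\<lambda>x. q ((B i - B0) x)) ` M)" if "q \<in> GG" for q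
        using Lspace_bdd[OF E F BD subsetD[OF GG(2) that] M] .
      have lsn0: "0 \<le> lsn M q (B i - B0)" if "q \<in> GG" for q
        by (rule lsn_nonneg[where q=q and T="B i - B0" and M=M, OF bB[OF that]])
      have lsnu: "q ((B i - B0) v) \<le> lsn M q (B i - B0)" if "q \<in> GG" "v \<in> M" for q v
        by (rule lsn_upper[where q=q and T="B i - B0" and M=M, OF bB[OF that(1)] that(2)])
      define X where "X = lsn NN r (A i - A0) + C * (\<Sum>q\<in>GG. lsn M q (B i - B0))"
      have sumle: "(\<Sum>q\<in>GG. lsn M q (B i - B0)) \<le> real (card GG) * \<delta>"
        using sum_bounded_above[of GG "\<lambda>q. lsn M q (B i - B0)" \<delta>] a2 by (simp add: less_imp_le)
      have "C * (\<Sum>q\<in>GG. lsn M q (B i - B0)) \<le> C * (real (card GG) * \<delta>)"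
        using sumle GG(3) by (rule mult_left_mono)
      then have Xe: "X < e" unfolding X_def using \<delta>C a1 by linarith
      have X0: "0 \<le> X" unfolding X_def
        using lsn_nonneg[where q=r and T="A i - A0" and M=NN, OF bA] GG(3)
          lsn0
        by (intro add_nonneg_nonneg mult_nonneg_nonneg sum_nonneg) auto
      have "lsn M r ((A i \<circ> B i) - (A0 \<circ> B0)) \<le> X"
      proof (rule lsn_le)
        fix v assume v: "v \<in> M"
        have "r (((A i \<circ> B i) - (A0 \<circ> B0)) v) = r (A i (B i v) - A0 (B0 v))" by simp
        also have "\<dots> \<le> r (A i (B i v) - A0 (B i v)) + r (A0 (B i v) - A0 (B0 v))"
          using snt_diff_le[OF snt_lcs[OF G] r] by blast
        also have "r (A i (B i v) - A0 (B i v)) \<le> lsn NN r (A i - A0)"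
          using lsn_upper[where q=r and T="A i - A0" and M=NN, OF bA BN[OF v]] by simp
        also have "r (A0 (B i v) - A0 (B0 v)) = r (A0 ((B i - B0) v))"
          using Lspace_diff[OF A'(1)] by simp
        also have "\<dots> \<le> C * (\<Sum>q\<in>GG. q ((B i - B0) v))" using GG(4) .
        also have "\<dots> \<le> C * (\<Sum>q\<in>GG. lsn M q (B i - B0))"
          using lsnu[OF _ v] GG(3)
          by (intro mult_left_mono sum_mono) auto
        finally show "r (((A i \<circ> B i) - (A0 \<circ> B0)) v) \<le> X" unfolding X_def by (simp add: fun_diff_def)
      qed (rule X0)
      then show ?case using Xe by linarith
    qed
  qed
qed


lemma eval_Sfam:
  fixes scE :: "'k::real_normed_field \<Rightarrow> 'e::ab_group_add \<Rightarrow> 'e" and scF :: "'k \<Rightarrow> 'f::ab_group_add \<Rightarrow> 'f"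
  assumes E: "lcs scE PE" and F: "lcs scF PF"
    and K: "compactin (Ltop b scE PE scF PF) K" and M: "M \<in> Sfam b PE"
  shows "(\<lambda>z. fst z (snd z)) ` (K \<times> M) \<in> Sfam b PF"
proof -
  have KL: "K \<subseteq> Lspace scE PE scF PF" using compactin_subset_topspace[OF K] unfolding Ltop_def by simp
  show ?thesis
  proof (cases b)
    case True
    have "bdd_above (q ` (\<lambda>z. fst z (snd z)) ` (K \<times> M))" if q: "q \<in> PF" for q
    proof -
      have "lsn M q \<in> Lseminorms b PE PF" unfolding Lseminorms_eq using M q by blast
      then have "bdd_above (lsn M q ` K)" by (rule compact_bdd_snt[OF snt_L[OF E F] K[unfolded Ltop_def]])
      then obtain c where c: "\<And>B. B \<in> K \<Longrightarrow> lsn M q B \<le> c" unfolding bdd_above_def by auto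
      have "q (B v) \<le> c" if "B \<in> K" "v \<in> M" for B v
      proof -
        have "q (B v) \<le> lsn M q B"
          using lsn_upper[where q=q and T=B and M=M, OF Lspace_bdd[OF E F _ q M] that(2)] KL that(1) by blast
        then show ?thesis using c[OF that(1)] by linarith
      qed
      then show ?thesis unfolding bdd_above_def by auto
    qed
    then show ?thesis using True unfolding Sfam_def bounded_sets_def by auto
  next
    case False
    have Mc: "compactin (lcs_top PE) M" using M False unfolding Sfam_def compact_sets_def by auto
    let ?P = "prod_topology (subtopology (Ltop b scE PE scF PF) K) (subtopology (lcs_top PE) M)"
    have cpt: "compactin ?P (K \<times> M)"
      unfolding compactin_Times compactin_subtopology using K Mc by auto
    have cont: "continuous_map ?P (lcs_top PF) (\<lambda>z. fst z (snd z))"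
      unfolding continuous_map_atin
    proof (intro ballI)
      fix z assume z: "z \<in> topspace ?P"
      obtain B0 v0 where zz: "z = (B0, v0)" by fastforce
      have B0: "B0 \<in> K" "v0 \<in> M" using z zz by auto
      have B0L: "B0 \<in> Lspace scE PE scF PF" using KL B0 by auto
      have lf: "limitin (Ltop b scE PE scF PF) fst B0 (atin ?P z)"
        using continuous_map_atin[THEN iffD1, OF continuous_map_fst, rule_format, OF z] zz
        unfolding limitin_subtopology by simp
      have ls: "limitin (lcs_top PE) snd v0 (atin ?P z)"
        using continuous_map_atin[THEN iffD1, OF continuous_map_snd, rule_format, OF z] zz
        unfolding limitin_subtopology by simp
      have lB: "limitin (lcs_top PF) (B0 \<circ> snd) (B0 v0) (atin ?P z)"
        using continuous_map_limit[OF LspaceD(3)[OF B0L] ls] .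
      have evT: "eventually (\<lambda>w. w \<in> topspace ?P) (atin ?P z)"
        unfolding eventually_atin using z by auto
      show "limitin (lcs_top PF) (\<lambda>z. fst z (snd z)) (fst z (snd z)) (atin ?P z)"
        unfolding limitin_snt[OF snt_lcs[OF F]]
      proof (intro conjI ballI allI impI)
        show "fst z (snd z) \<in> UNIV" by simp
        show "eventually (\<lambda>w. fst w (snd w) \<in> UNIV) (atin ?P z)" by simp
        fix q and e :: real assume q: "q \<in> PF" and e: "e > 0"
        have e2p: "e/2 > 0" using e by simp
        have H1: "\<forall>M\<in>Sfam b PE. \<forall>q\<in>PF. \<forall>e>0. eventually (\<lambda>x. lsn M q (fst x - B0) < e) (atin ?P z)"
          using lf unfolding limitin_L[OF E F] by blast
        have e1: "eventually (\<lambda>w. lsn M q (fst w - B0) < e/2) (atin ?P z)"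
          using H1 M q e2p by blast
        have H2: "\<forall>p\<in>PF. \<forall>e>0. eventually (\<lambda>x. p ((B0 \<circ> snd) x - B0 v0) < e) (atin ?P z)"
          using lB unfolding limitin_snt[OF snt_lcs[OF F]] by blast
        have e2: "eventually (\<lambda>w. q (B0 (snd w) - B0 v0) < e/2) (atin ?P z)"
          using H2 q e2p unfolding o_def by blast
        show "eventually (\<lambda>w. q (fst w (snd w) - fst z (snd z)) < e) (atin ?P z)"
          using evT e1 e2
        proof eventually_elim
          case (elim w)
          have wK: "fst w \<in> K" and wM: "snd w \<in> M" using elim(1) by auto
          have D: "fst w - B0 \<in> Lspace scE PE scF PF" using Lspace_plus_fun(2)[OF E F _ B0L] KL wK by blast
          have "q (fst w (snd w) - B0 v0) \<le> q (fst w (snd w) - B0 (snd w)) + q (B0 (snd w) - B0 v0)"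
            using snt_diff_le[OF snt_lcs[OF F] q] by blast
          also have "q (fst w (snd w) - B0 (snd w)) \<le> lsn M q (fst w - B0)"
            using lsn_upper[where q=q and T="fst w - B0" and M=M, OF Lspace_bdd[OF E F D q M] wM] by simp
          finally show ?case using elim(2,3) zz by simp
        qed
      qed
    qed
    have "compactin (lcs_top PF) ((\<lambda>z. fst z (snd z)) ` (K \<times> M))"
      using image_compactin[OF cpt cont] .
    then show ?thesis using False unfolding Sfam_def compact_sets_def by auto
  qed
qed

lemma compactin_seq_limit:
  assumes L: "limitin X f l sequentially" and T: "\<And>n. n \<ge> n1 \<Longrightarrow> f n \<in> topspace X"
  shows "compactin X (insert l (f ` {n1..}))"
  unfolding compactin_def
proof (intro conjI allI impI)
  show "insert l (f ` {n1..}) \<subseteq> topspace X" using T limitin_topspace[OF L] by auto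
  fix \<U> assume U: "(\<forall>U\<in>\<U>. openin X U) \<and> insert l (f ` {n1..}) \<subseteq> \<Union>\<U>"
  then obtain U0 where U0: "U0 \<in> \<U>" "l \<in> U0" by auto
  then have "eventually (\<lambda>n. f n \<in> U0) sequentially" using L U unfolding limitin_def by blast
  then obtain n2 where n2: "\<And>n. n \<ge> n2 \<Longrightarrow> f n \<in> U0" unfolding eventually_sequentially by blast
  have "\<forall>n\<in>{n1..<n2}. \<exists>V. V \<in> \<U> \<and> f n \<in> V"
  proof
    fix n assume "n \<in> {n1..<n2}"
    then have "f n \<in> \<Union>\<U>" using U by auto
    then show "\<exists>V. V \<in> \<U> \<and> f n \<in> V" by blast
  qed
  then obtain W where W: "\<And>n. n \<in> {n1..<n2} \<Longrightarrow> W n \<in> \<U> \<and> f n \<in> W n" by metis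
  show "\<exists>\<F>. finite \<F> \<and> \<F> \<subseteq> \<U> \<and> insert l (f ` {n1..}) \<subseteq> \<Union>\<F>"
  proof (intro exI[of _ "insert U0 (W ` {n1..<n2})"] conjI)
    show "finite (insert U0 (W ` {n1..<n2}))" by simp
    show "insert U0 (W ` {n1..<n2}) \<subseteq> \<U>" using U0 W by auto
    show "insert l (f ` {n1..}) \<subseteq> \<Union> (insert U0 (W ` {n1..<n2}))"
    proof
      fix y assume "y \<in> insert l (f ` {n1..})"
      then consider "y = l" | n where "n \<ge> n1" "y = f n" by auto
      then show "y \<in> \<Union> (insert U0 (W ` {n1..<n2}))"
      proof cases
        case 1 then show ?thesis using U0 by auto
      next
        case (2 n)
        show ?thesis
        proof (cases "n < n2")
          case True then show ?thesis using W[of n] 2 by auto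
        next
          case False then show ?thesis using n2[of n] 2 by auto
        qed
      qed
    qed
  qed
qed

lemma seq_N:
  fixes scE :: "'k::real_normed_field \<Rightarrow> 'e::ab_group_add \<Rightarrow> 'e" and scF :: "'k \<Rightarrow> 'f::ab_group_add \<Rightarrow> 'f"
  assumes E: "lcs scE PE" and F: "lcs scF PF"
    and B: "limitin (Ltop b scE PE scF PF) B B0 sequentially"
  shows "\<forall>M\<in>Sfam b PE. \<exists>N\<in>Sfam b PF. eventually (\<lambda>n. \<forall>v\<in>M. B n v \<in> N) sequentially"
proof
  fix M assume M: "M \<in> Sfam b PE"
  have "eventually (\<lambda>n. B n \<in> Lspace scE PE scF PF) sequentially" using B unfolding limitin_L[OF E F] by auto
  then obtain n1 where n1: "\<And>n. n \<ge> n1 \<Longrightarrow> B n \<in> Lspace scE PE scF PF" unfolding eventually_sequentially by blast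
  have K: "compactin (Ltop b scE PE scF PF) (insert B0 (B ` {n1..}))"
    by (rule compactin_seq_limit[OF B]) (use n1 in \<open>simp add: Ltop_def\<close>)
  show "\<exists>N\<in>Sfam b PF. eventually (\<lambda>n. \<forall>v\<in>M. B n v \<in> N) sequentially"
  proof (intro bexI)
    show "eventually (\<lambda>n. \<forall>v\<in>M. B n v \<in> (\<lambda>z. fst z (snd z)) ` (insert B0 (B ` {n1..}) \<times> M)) sequentially"
      unfolding eventually_sequentially
    proof (intro exI[of _ n1] allI impI ballI)
      fix n v assume "n1 \<le> n" "v \<in> M"
      then have "(B n, v) \<in> insert B0 (B ` {n1..}) \<times> M" by auto
      then show "B n v \<in> (\<lambda>z. fst z (snd z)) ` (insert B0 (B ` {n1..}) \<times> M)"
        by (metis (no_types, lifting) fst_conv image_eqI snd_conv)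
    qed
  qed (rule eval_Sfam[OF E F K M])
qed


section \<open>Generic facts on the C^k recursion\<close>

lemma Ck_cont: "Ck scX PX scY TY k m W phi \<Longrightarrow> continuous_map (subtopology (Xpow PX m) W) TY phi"
  by (cases k) auto

lemma Ck_Suc_mono: "Ck scX PX scY TY (Suc k) m W phi \<Longrightarrow> Ck scX PX scY TY k m W phi"
proof (induction k arbitrary: m W phi)
  case 0 then show ?case by simp
next
  case (Suc k)
  from Suc.prems obtain psi where "continuous_map (subtopology (Xpow PX m) W) TY phi"
    "is_dirderiv scX PX scY TY m W phi psi" "Ck scX PX scY TY (Suc k) (2*m) (dom2 PX m W) psi" by auto
  moreover have "Ck scX PX scY TY k (2*m) (dom2 PX m W) psi" using Suc.IH calculation(3) .
  ultimately show ?case by (simp only: Ck.simps) blast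
qed

definition sel :: "(nat \<Rightarrow> nat) \<Rightarrow> nat \<Rightarrow> (nat \<Rightarrow> 'x) \<Rightarrow> (nat \<Rightarrow> 'x)" where
  "sel s m' w = restrict (\<lambda>i. w (s i)) {..<m'}"

lemma sel_cont:
  assumes "\<And>i. i < m' \<Longrightarrow> s i < M"
  shows "continuous_map (Xpow PX M) (Xpow PX m') (sel s m')"
  unfolding Xpow_def continuous_map_componentwise
proof (intro conjI ballI)
  show "sel s m' ` topspace (product_topology (\<lambda>_. lcs_top PX) {..<M}) \<subseteq> extensional {..<m'}"
    unfolding sel_def by auto
  fix k assume k: "k \<in> {..<m'}"
  have "continuous_map (product_topology (\<lambda>_. lcs_top PX) {..<M}) (lcs_top PX) (\<lambda>x. x (s k))"
    using assms k by (intro continuous_map_product_projection) auto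
  then show "continuous_map (product_topology (\<lambda>_. lcs_top PX) {..<M}) (lcs_top PX) (\<lambda>x. sel s m' x k)"
    unfolding sel_def using k by simp
qed

lemma sel_topspace: "sel s m' w \<in> topspace (Xpow PX m')"
  unfolding sel_def Xpow_def by auto

lemma restrict_topspace: "restrict w {..<m} \<in> topspace (Xpow PX m)"
  unfolding Xpow_def by auto

lemma Ck_sel:
  assumes "\<And>i. i < m' \<Longrightarrow> s i < M" "\<And>w. w \<in> W \<Longrightarrow> sel s m' w \<in> W'"
    and "Ck scX PX scY TY k m' W' phi"
  shows "Ck scX PX scY TY k M W (phi \<circ> sel s m')"
  using assms
proof (induction k arbitrary: M m' s W W' phi)
  case 0
  have c0: "continuous_map (subtopology (Xpow PX M) W) (subtopology (Xpow PX m') W') (sel s m')"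
    unfolding continuous_map_in_subtopology
    using continuous_map_from_subtopology[OF sel_cont[OF 0(1)]] 0(2) by auto
  have "continuous_map (subtopology (Xpow PX M) W) TY (phi \<circ> sel s m')"
    using continuous_map_compose[OF c0 0(3)[unfolded Ck.simps]] .
  then show ?case by (simp only: Ck.simps)
next
  case (Suc k)
  from Suc.prems(3) obtain psi where cont: "continuous_map (subtopology (Xpow PX m') W') TY phi"
    and dd: "is_dirderiv scX PX scY TY m' W' phi psi" and ck: "Ck scX PX scY TY k (2*m') (dom2 PX m' W') psi"
    by auto
  have c1: "continuous_map (subtopology (Xpow PX M) W) (subtopology (Xpow PX m') W') (sel s m')"
    unfolding continuous_map_in_subtopology
    using continuous_map_from_subtopology[OF sel_cont[OF Suc.prems(1)]] Suc.prems(2) by auto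
  define s' where "s' = (\<lambda>i. if i < m' then s i else M + s (i - m'))"
  have s'1: "s' i < 2 * M" if "i < 2 * m'" for i
    using Suc.prems(1)[of i] Suc.prems(1)[of "i - m'"] that unfolding s'_def by auto
  have sh: "sel s m' (shiftpt scX M w t) = shiftpt scX m' (sel s' (2*m') w) t" for w t
    unfolding sel_def shiftpt_def s'_def using Suc.prems(1) by (auto simp: fun_eq_iff)
  have rs: "sel s m' (restrict w {..<M}) = restrict (sel s' (2*m') w) {..<m'}" for w
    unfolding sel_def s'_def using Suc.prems(1) by (auto simp: fun_eq_iff)
  have dmap: "sel s' (2*m') w \<in> dom2 PX m' W'" if "w \<in> dom2 PX M W" for w
  proof -
    have "restrict w {..<M} \<in> W" using that unfolding dom2_def by auto
    then have "sel s m' (restrict w {..<M}) \<in> W'" by (rule Suc.prems(2))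
    then show ?thesis unfolding dom2_def rs using sel_topspace by auto
  qed
  have "is_dirderiv scX PX scY TY M W (phi \<circ> sel s m') (psi \<circ> sel s' (2*m'))"
    unfolding is_dirderiv_def
  proof
    fix w assume w: "w \<in> dom2 PX M W"
    have "limitin TY (\<lambda>t. scY (inverse t) (phi (shiftpt scX m' (sel s' (2*m') w) t) - phi (restrict (sel s' (2*m') w) {..<m'})))
        (psi (sel s' (2*m') w)) (at 0)"
      using dd dmap[OF w] unfolding is_dirderiv_def by blast
    then show "limitin TY (\<lambda>t. scY (inverse t) ((phi \<circ> sel s m') (shiftpt scX M w t) - (phi \<circ> sel s m') (restrict w {..<M})))
        ((psi \<circ> sel s' (2*m')) w) (at 0)"
      unfolding o_def sh rs .
  qed
  moreover have "Ck scX PX scY TY k (2*M) (dom2 PX M W) (psi \<circ> sel s' (2*m'))"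
    using Suc.IH[OF s'1 dmap ck] by blast
  ultimately show ?case using continuous_map_compose[OF c1 cont] by (simp only: Ck.simps) blast
qed

lemma openin_dom2:
  assumes "openin (Xpow PX m) W"
  shows "openin (Xpow PX (2*m)) (dom2 PX m W)"
proof -
  have c1: "continuous_map (Xpow PX (2*m)) (Xpow PX m) (sel (\<lambda>i. i) m)"
    by (rule sel_cont) auto
  have eq: "sel (\<lambda>i. i) m = (\<lambda>w. restrict w {..<m})" unfolding sel_def by auto
  have c: "continuous_map (Xpow PX (2*m)) (Xpow PX m) (\<lambda>w. restrict w {..<m})"
    by (subst eq[symmetric]) (rule c1)
  have "openin (Xpow PX (2*m)) {x \<in> topspace (Xpow PX (2*m)). restrict x {..<m} \<in> W}"
    using openin_continuous_map_preimage[OF c assms] .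
  then show ?thesis unfolding dom2_def .
qed

lemma limitin_filterlim:
  assumes "limitin X g l F" "filterlim f F G"
  shows "limitin X (\<lambda>n. g (f n)) l G"
  using assms unfolding limitin_def filterlim_iff by blast

lemma seq_to_at:
  fixes a :: "'a::first_countable_topology"
  assumes l: "l \<in> topspace X"
    and S: "\<And>f. (\<forall>n. f n \<noteq> a) \<Longrightarrow> f \<longlonglongrightarrow> a \<Longrightarrow> limitin X (\<lambda>n. g (f n)) l sequentially"
  shows "limitin X g l (at a)"
  unfolding limitin_def
proof (intro conjI allI impI)
  show "l \<in> topspace X" by (rule l)
  fix U assume U: "openin X U \<and> l \<in> U"
  show "eventually (\<lambda>x. g x \<in> U) (at a)"
  proof (rule sequentially_imp_eventually_at, intro allI impI)
    fix f :: "nat \<Rightarrow> 'a" assume "(\<forall>n. f n \<noteq> a) \<and> f \<longlonglongrightarrow> a"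
    then have "limitin X (\<lambda>n. g (f n)) l sequentially" using S by blast
    then show "eventually (\<lambda>n. g (f n) \<in> U) sequentially" using U unfolding limitin_def by blast
  qed
qed


section \<open>Sums\<close>

lemma cont_add_L:
  fixes scE :: "'k::real_normed_field \<Rightarrow> 'e::ab_group_add \<Rightarrow> 'e" and scG :: "'k \<Rightarrow> 'g::ab_group_add \<Rightarrow> 'g"
  assumes E: "lcs scE PE" and G: "lcs scG PG"
    and "continuous_map X (Ltop b scE PE scG PG) phi" "continuous_map X (Ltop b scE PE scG PG) psi"
  shows "continuous_map X (Ltop b scE PE scG PG) (\<lambda>w. phi w + psi w)"
  using assms(3,4) unfolding continuous_map_atin Ltop_def
  using limitin_add_snt[OF snt_L[OF E G]] by blast

lemma Lscale_sum_diff: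
  assumes "module scG"
  shows "Lscale scG c ((A + B) - (C + D)) = Lscale scG c (A - C) + Lscale scG c (B - D)"
proof (rule ext)
  fix v
  have "scG c ((A v + B v) - (C v + D v)) = scG c ((A v - C v) + (B v - D v))"
    by (rule arg_cong[where f="scG c"]) simp
  then show "Lscale scG c ((A + B) - (C + D)) v = (Lscale scG c (A - C) + Lscale scG c (B - D)) v"
    unfolding Lscale_def using module.scale_right_distrib[OF assms, of c "A v - C v" "B v - D v"] by simp
qed

lemma Ck_add:
  fixes scE :: "'k::real_normed_field \<Rightarrow> 'e::ab_group_add \<Rightarrow> 'e" and scG :: "'k \<Rightarrow> 'g::ab_group_add \<Rightarrow> 'g"
    and scX :: "'k \<Rightarrow> 'x::ab_group_add \<Rightarrow> 'x"
  assumes E: "lcs scE PE" and G: "lcs scG PG"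
  shows "Ck scX PX (Lscale scG) (Ltop b scE PE scG PG) k m W phi \<Longrightarrow> Ck scX PX (Lscale scG) (Ltop b scE PE scG PG) k m W psi
    \<Longrightarrow> Ck scX PX (Lscale scG) (Ltop b scE PE scG PG) k m W (\<lambda>w. phi w + psi w)"
proof (induction k arbitrary: m W phi psi)
  case 0
  then show ?case using cont_add_L[OF E G] by (simp only: Ck.simps)
next
  case (Suc k)
  from Suc.prems(1) obtain phi' where c1: "continuous_map (subtopology (Xpow PX m) W) (Ltop b scE PE scG PG) phi"
    and d1: "is_dirderiv scX PX (Lscale scG) (Ltop b scE PE scG PG) m W phi phi'"
    and k1: "Ck scX PX (Lscale scG) (Ltop b scE PE scG PG) k (2*m) (dom2 PX m W) phi'" by auto
  from Suc.prems(2) obtain psi' where c2: "continuous_map (subtopology (Xpow PX m) W) (Ltop b scE PE scG PG) psi"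
    and d2: "is_dirderiv scX PX (Lscale scG) (Ltop b scE PE scG PG) m W psi psi'"
    and k2: "Ck scX PX (Lscale scG) (Ltop b scE PE scG PG) k (2*m) (dom2 PX m W) psi'" by auto
  have "is_dirderiv scX PX (Lscale scG) (Ltop b scE PE scG PG) m W (\<lambda>w. phi w + psi w) (\<lambda>w. phi' w + psi' w)"
    unfolding is_dirderiv_def
  proof
    fix w assume w: "w \<in> dom2 PX m W"
    have l1: "limitin (Ltop b scE PE scG PG) (\<lambda>t. Lscale scG (inverse t) (phi (shiftpt scX m w t) - phi (restrict w {..<m}))) (phi' w) (at 0)"
      using d1 w unfolding is_dirderiv_def by blast
    have l2: "limitin (Ltop b scE PE scG PG) (\<lambda>t. Lscale scG (inverse t) (psi (shiftpt scX m w t) - psi (restrict w {..<m}))) (psi' w) (at 0)"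
      using d2 w unfolding is_dirderiv_def by blast
    have "limitin (Ltop b scE PE scG PG) (\<lambda>t. Lscale scG (inverse t) (phi (shiftpt scX m w t) - phi (restrict w {..<m}))
         + Lscale scG (inverse t) (psi (shiftpt scX m w t) - psi (restrict w {..<m}))) (phi' w + psi' w) (at 0)"
      using limitin_add_snt[OF snt_L[OF E G] l1[unfolded Ltop_def] l2[unfolded Ltop_def]] unfolding Ltop_def .
    then show "limitin (Ltop b scE PE scG PG) (\<lambda>t. Lscale scG (inverse t) ((phi (shiftpt scX m w t) + psi (shiftpt scX m w t))
         - (phi (restrict w {..<m}) + psi (restrict w {..<m})))) (phi' w + psi' w) (at 0)"
      unfolding Lscale_sum_diff[OF lcs_module[OF G]] .
  qed
  moreover have "Ck scX PX (Lscale scG) (Ltop b scE PE scG PG) k (2*m) (dom2 PX m W) (\<lambda>w. phi' w + psi' w)"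
    using Suc.IH[OF k1 k2] .
  moreover have "continuous_map (subtopology (Xpow PX m) W) (Ltop b scE PE scG PG) (\<lambda>w. phi w + psi w)"
    using cont_add_L[OF E G c1 c2] .
  ultimately show ?case by (simp only: Ck.simps) blast
qed

section \<open>Composition\<close>

lemma comp_cont:
  fixes scE :: "'k::real_normed_field \<Rightarrow> 'e::ab_group_add \<Rightarrow> 'e" and scF :: "'k \<Rightarrow> 'f::ab_group_add \<Rightarrow> 'f"
    and scG :: "'k \<Rightarrow> 'g::ab_group_add \<Rightarrow> 'g" and PX :: "('x::ab_group_add \<Rightarrow> real) set"
  assumes E: "lcs scE PE" and F: "lcs scF PF" and G: "lcs scG PG"
    and kinf: "kinf_space (lcs_top PX)" and W: "openin (Xpow PX m) W"
    and cA: "continuous_map (subtopology (Xpow PX m) W) (Ltop b scF PF scG PG) A"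
    and cB: "continuous_map (subtopology (Xpow PX m) W) (Ltop b scE PE scF PF) B"
  shows "continuous_map (subtopology (Xpow PX m) W) (Ltop b scE PE scG PG) (\<lambda>w. A w \<circ> B w)"
proof -
  have H: "Hausdorff_space (Xpow PX m)" unfolding Xpow_def Hausdorff_space_product_topology
    using kinf unfolding kinf_space_def by auto
  have K: "k_space (Xpow PX m)" using kinf unfolding kinf_space_def Xpow_def by auto
  have KW: "k_space (subtopology (Xpow PX m) W)" using k_space_open_subtopology H K W by blast
  show ?thesis
  proof (rule continuous_map_from_k_space[OF KW])
    fix C assume C: "compactin (subtopology (Xpow PX m) W) C"
    let ?XC = "subtopology (subtopology (Xpow PX m) W) C"
    have cA': "continuous_map ?XC (Ltop b scF PF scG PG) A" by (rule continuous_map_from_subtopology[OF cA])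
    have cB': "continuous_map ?XC (Ltop b scE PE scF PF) B" by (rule continuous_map_from_subtopology[OF cB])
    have Kc: "compactin (Ltop b scE PE scF PF) (B ` topspace ?XC)"
      using image_compactin[OF _ cB'] compact_space_subtopology[OF C] unfolding compact_space_def by blast
    show "continuous_map ?XC (Ltop b scE PE scG PG) (\<lambda>w. A w \<circ> B w)"
      unfolding continuous_map_atin
    proof
      fix x assume x: "x \<in> topspace ?XC"
      have lA: "limitin (Ltop b scF PF scG PG) A (A x) (atin ?XC x)" using cA' x unfolding continuous_map_atin by blast
      have lB: "limitin (Ltop b scE PE scF PF) B (B x) (atin ?XC x)" using cB' x unfolding continuous_map_atin by blast
      have evT: "eventually (\<lambda>y. y \<in> topspace ?XC) (atin ?XC x)" unfolding eventually_atin using x by auto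
      have N: "\<forall>M\<in>Sfam b PE. \<exists>N\<in>Sfam b PF. eventually (\<lambda>y. \<forall>v\<in>M. B y v \<in> N) (atin ?XC x)"
      proof
        fix M assume M: "M \<in> Sfam b PE"
        show "\<exists>N\<in>Sfam b PF. eventually (\<lambda>y. \<forall>v\<in>M. B y v \<in> N) (atin ?XC x)"
        proof (intro bexI)
          show "eventually (\<lambda>y. \<forall>v\<in>M. B y v \<in> (\<lambda>z. fst z (snd z)) ` (B ` topspace ?XC \<times> M)) (atin ?XC x)"
            using evT
          proof (rule eventually_mono)
            fix y assume y: "y \<in> topspace ?XC"
            show "\<forall>v\<in>M. B y v \<in> (\<lambda>z. fst z (snd z)) ` (B ` topspace ?XC \<times> M)"
            proof
              fix v assume "v \<in> M"
              then have "(B y, v) \<in> B ` topspace ?XC \<times> M" using y by auto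
              then show "B y v \<in> (\<lambda>z. fst z (snd z)) ` (B ` topspace ?XC \<times> M)"
                by (metis (no_types, lifting) fst_conv image_eqI snd_conv)
            qed
          qed
        qed (rule eval_Sfam[OF E F Kc M])
      qed
      show "limitin (Ltop b scE PE scG PG) (\<lambda>w. A w \<circ> B w) (A x \<circ> B x) (atin ?XC x)"
        by (rule comp_limit[OF E F G lA lB N])
    qed
  qed
qed

lemma quot_comp:
  assumes G: "lcs scG PG" and P0: "P0 \<in> Lspace scF PF scG PG"
  shows "Lscale scG c ((P \<circ> R) - (P0 \<circ> R0)) = (Lscale scG c (P - P0) \<circ> R) + (P0 \<circ> Lscale scF c (R - R0))"
proof (rule ext)
  fix v
  have "P0 (scF c (R v - R0 v)) = scG c (P0 (R v) - P0 (R0 v))" using LspaceD(2)[OF P0] Lspace_diff[OF P0] by simp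
  moreover have "scG c (P (R v) - P0 (R v)) + scG c (P0 (R v) - P0 (R0 v)) = scG c (P (R v) - P0 (R0 v))"
    using module.scale_right_distrib[OF lcs_module[OF G], of c "P (R v) - P0 (R v)" "P0 (R v) - P0 (R0 v)"] by simp
  ultimately show "Lscale scG c ((P \<circ> R) - (P0 \<circ> R0)) v = ((Lscale scG c (P - P0) \<circ> R) + (P0 \<circ> Lscale scF c (R - R0))) v"
    unfolding Lscale_def by simp
qed

lemma shift_limit:
  fixes scX :: "'k::real_normed_field \<Rightarrow> 'x::ab_group_add \<Rightarrow> 'x"
  assumes X: "lcs scX PX"
  shows "limitin (Xpow PX m) (shiftpt scX m w) (restrict w {..<m}) (at 0)"
  unfolding Xpow_def limitin_componentwise
proof (intro conjI ballI)
  show "restrict w {..<m} \<in> extensional {..<m}" by simp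
  show "eventually (\<lambda>t. shiftpt scX m w t \<in> topspace (product_topology (\<lambda>_. lcs_top PX) {..<m})) (at 0)"
    by (simp add: shiftpt_def)
  fix i assume i: "i \<in> {..<m}"
  show "limitin (lcs_top PX) (\<lambda>t. shiftpt scX m w t i) (restrict w {..<m} i) (at 0)"
    unfolding limitin_snt[OF snt_lcs[OF X]]
  proof (intro conjI ballI allI impI)
    show "restrict w {..<m} i \<in> UNIV" by simp
    show "eventually (\<lambda>t. shiftpt scX m w t i \<in> UNIV) (at 0)" by simp
    fix p and e :: real assume p: "p \<in> PX" and e: "e > 0"
    have eq: "p (shiftpt scX m w t i - restrict w {..<m} i) = norm t * p (w (m+i))" for t
      using i lcs_seminorm(2)[OF X p] by (simp add: shiftpt_def)
    define d where "d = e / (p (w (m+i)) + 1)"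
    have pp: "p (w (m+i)) \<ge> 0" using lcs_seminorm(1)[OF X p] by blast
    have d0: "d > 0" unfolding d_def using e pp by simp
    show "eventually (\<lambda>t. p (shiftpt scX m w t i - restrict w {..<m} i) < e) (at 0)"
      unfolding eq eventually_at
    proof (intro exI[of _ d] conjI ballI impI)
      show "d > 0" by (rule d0)
      fix t :: 'k assume "t \<noteq> 0 \<and> dist t 0 < d"
      then have nt: "norm t < d" by simp
      have "norm t * p (w (m+i)) \<le> norm t * (p (w (m+i)) + 1)" by (simp add: mult_left_mono)
      also have "\<dots> < d * (p (w (m+i)) + 1)" using nt pp by (intro mult_strict_right_mono) auto
      also have "\<dots> = e" unfolding d_def using pp by simp
      finally show "norm t * p (w (m+i)) < e" .
    qed
  qed
qed


lemma comp_deriv: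
  fixes scE :: "'k::real_normed_field \<Rightarrow> 'e::ab_group_add \<Rightarrow> 'e" and scF :: "'k \<Rightarrow> 'f::ab_group_add \<Rightarrow> 'f"
    and scG :: "'k \<Rightarrow> 'g::ab_group_add \<Rightarrow> 'g" and scX :: "'k \<Rightarrow> 'x::ab_group_add \<Rightarrow> 'x"
  assumes X: "lcs scX PX" and E: "lcs scE PE" and F: "lcs scF PF" and G: "lcs scG PG"
    and W: "openin (Xpow PX m) W"
    and cA: "continuous_map (subtopology (Xpow PX m) W) (Ltop b scF PF scG PG) A"
    and cB: "continuous_map (subtopology (Xpow PX m) W) (Ltop b scE PE scF PF) B"
    and dA: "is_dirderiv scX PX (Lscale scG) (Ltop b scF PF scG PG) m W A A'"
    and dB: "is_dirderiv scX PX (Lscale scF) (Ltop b scE PE scF PF) m W B B'"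
  shows "is_dirderiv scX PX (Lscale scG) (Ltop b scE PE scG PG) m W (\<lambda>w. A w \<circ> B w)
           (\<lambda>w. (A' w \<circ> B (restrict w {..<m})) + (A (restrict w {..<m}) \<circ> B' w))"
  unfolding is_dirderiv_def
proof
  fix w assume w: "w \<in> dom2 PX m W"
  define x where "x = restrict w {..<m}"
  define s where "s = shiftpt scX m w"
  have xW: "x \<in> W" using w unfolding dom2_def x_def by auto
  have ls: "limitin (Xpow PX m) s x (at 0)" unfolding s_def x_def by (rule shift_limit[OF X])
  have evW: "eventually (\<lambda>t. s t \<in> W) (at 0)" using ls W xW unfolding limitin_def by blast
  have lsW: "limitin (subtopology (Xpow PX m) W) s x (at 0)"
    unfolding limitin_subtopology using xW evW ls by blast
  have lAs: "limitin (Ltop b scF PF scG PG) (\<lambda>t. A (s t)) (A x) (at 0)"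
    using continuous_map_limit[OF cA lsW] unfolding o_def .
  have lBs: "limitin (Ltop b scE PE scF PF) (\<lambda>t. B (s t)) (B x) (at 0)"
    using continuous_map_limit[OF cB lsW] unfolding o_def .
  have AxL: "A x \<in> Lspace scF PF scG PG" using limitin_topspace[OF lAs] unfolding Ltop_def by simp
  have BxL: "B x \<in> Lspace scE PE scF PF" using limitin_topspace[OF lBs] unfolding Ltop_def by simp
  have D1: "limitin (Ltop b scF PF scG PG) (\<lambda>t. Lscale scG (inverse t) (A (s t) - A x)) (A' w) (at 0)"
    using dA w unfolding is_dirderiv_def s_def x_def by blast
  have D2: "limitin (Ltop b scE PE scF PF) (\<lambda>t. Lscale scF (inverse t) (B (s t) - B x)) (B' w) (at 0)"
    using dB w unfolding is_dirderiv_def s_def x_def by blast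
  have A'L: "A' w \<in> Lspace scF PF scG PG" using limitin_topspace[OF D1] unfolding Ltop_def by simp
  have B'L: "B' w \<in> Lspace scE PE scF PF" using limitin_topspace[OF D2] unfolding Ltop_def by simp
  have "limitin (Ltop b scE PE scG PG) (\<lambda>t. Lscale scG (inverse t) ((A (s t) \<circ> B (s t)) - (A x \<circ> B x)))
          ((A' w \<circ> B x) + (A x \<circ> B' w)) (at 0)"
  proof (rule seq_to_at)
    show "(A' w \<circ> B x) + (A x \<circ> B' w) \<in> topspace (Ltop b scE PE scG PG)"
      unfolding Ltop_def topspace_snt
      using Lspace_plus_fun(1)[OF E G Lspace_comp[OF BxL A'L] Lspace_comp[OF B'L AxL]] .
    fix \<tau> :: "nat \<Rightarrow> 'k" assume \<tau>1: "\<forall>n. \<tau> n \<noteq> 0" and \<tau>2: "\<tau> \<longlonglongrightarrow> 0"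
    have fl: "filterlim \<tau> (at 0) sequentially" using \<tau>1 \<tau>2 by (simp add: filterlim_at)
    have a1: "limitin (Ltop b scF PF scG PG) (\<lambda>n. Lscale scG (inverse (\<tau> n)) (A (s (\<tau> n)) - A x)) (A' w) sequentially"
      using limitin_filterlim[OF D1 fl] .
    have b1: "limitin (Ltop b scE PE scF PF) (\<lambda>n. B (s (\<tau> n))) (B x) sequentially"
      using limitin_filterlim[OF lBs fl] .
    have b2: "limitin (Ltop b scE PE scF PF) (\<lambda>n. Lscale scF (inverse (\<tau> n)) (B (s (\<tau> n)) - B x)) (B' w) sequentially"
      using limitin_filterlim[OF D2 fl] .
    have a2: "limitin (Ltop b scF PF scG PG) (\<lambda>n. A x) (A x) sequentially"
      using AxL unfolding Ltop_def by simp
    have c1: "limitin (Ltop b scE PE scG PG) (\<lambda>n. Lscale scG (inverse (\<tau> n)) (A (s (\<tau> n)) - A x) \<circ> B (s (\<tau> n))) (A' w \<circ> B x) sequentially"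
      by (rule comp_limit[OF E F G a1 b1 seq_N[OF E F b1]])
    have c2: "limitin (Ltop b scE PE scG PG) (\<lambda>n. A x \<circ> Lscale scF (inverse (\<tau> n)) (B (s (\<tau> n)) - B x)) (A x \<circ> B' w) sequentially"
      by (rule comp_limit[OF E F G a2 b2 seq_N[OF E F b2]])
    have "limitin (Ltop b scE PE scG PG) (\<lambda>n. (Lscale scG (inverse (\<tau> n)) (A (s (\<tau> n)) - A x) \<circ> B (s (\<tau> n)))
       + (A x \<circ> Lscale scF (inverse (\<tau> n)) (B (s (\<tau> n)) - B x))) ((A' w \<circ> B x) + (A x \<circ> B' w)) sequentially"
      using limitin_add_snt[OF snt_L[OF E G] c1[unfolded Ltop_def] c2[unfolded Ltop_def]] unfolding Ltop_def .
    then show "limitin (Ltop b scE PE scG PG) (\<lambda>n. Lscale scG (inverse (\<tau> n)) ((A (s (\<tau> n)) \<circ> B (s (\<tau> n))) - (A x \<circ> B x)))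
       ((A' w \<circ> B x) + (A x \<circ> B' w)) sequentially"
      unfolding quot_comp[OF G AxL] .
  qed
  then show "limitin (Ltop b scE PE scG PG)
     (\<lambda>t. Lscale scG (inverse t) ((A (shiftpt scX m w t) \<circ> B (shiftpt scX m w t)) - (A (restrict w {..<m}) \<circ> B (restrict w {..<m}))))
     ((A' w \<circ> B (restrict w {..<m})) + (A (restrict w {..<m}) \<circ> B' w)) (at 0)"
    unfolding s_def x_def .
qed

lemma sel_id: "sel (\<lambda>i. i) m w = restrict w {..<m}"
  unfolding sel_def by simp

lemma comp_Ck:
  fixes scE :: "'k::real_normed_field \<Rightarrow> 'e::ab_group_add \<Rightarrow> 'e" and scF :: "'k \<Rightarrow> 'f::ab_group_add \<Rightarrow> 'f"
    and scG :: "'k \<Rightarrow> 'g::ab_group_add \<Rightarrow> 'g" and scX :: "'k \<Rightarrow> 'x::ab_group_add \<Rightarrow> 'x"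
  assumes X: "lcs scX PX" and E: "lcs scE PE" and F: "lcs scF PF" and G: "lcs scG PG"
    and kinf: "kinf_space (lcs_top PX)"
  shows "openin (Xpow PX m) W \<Longrightarrow> Ck scX PX (Lscale scG) (Ltop b scF PF scG PG) k m W A
    \<Longrightarrow> Ck scX PX (Lscale scF) (Ltop b scE PE scF PF) k m W B
    \<Longrightarrow> Ck scX PX (Lscale scG) (Ltop b scE PE scG PG) k m W (\<lambda>w. A w \<circ> B w)"
proof (induction k arbitrary: m W A B)
  case 0
  then show ?case using comp_cont[OF E F G kinf] by (simp only: Ck.simps)
next
  case (Suc k)
  from Suc.prems(2) obtain A' where cA: "continuous_map (subtopology (Xpow PX m) W) (Ltop b scF PF scG PG) A"
    and dA: "is_dirderiv scX PX (Lscale scG) (Ltop b scF PF scG PG) m W A A'"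
    and kA: "Ck scX PX (Lscale scG) (Ltop b scF PF scG PG) k (2*m) (dom2 PX m W) A'" by auto
  from Suc.prems(3) obtain B' where cB: "continuous_map (subtopology (Xpow PX m) W) (Ltop b scE PE scF PF) B"
    and dB: "is_dirderiv scX PX (Lscale scF) (Ltop b scE PE scF PF) m W B B'"
    and kB: "Ck scX PX (Lscale scF) (Ltop b scE PE scF PF) k (2*m) (dom2 PX m W) B'" by auto
  have W2: "openin (Xpow PX (2*m)) (dom2 PX m W)" using openin_dom2[OF Suc.prems(1)] .
  have i1: "\<And>i. i < m \<Longrightarrow> i < 2*m" by simp
  have i2: "\<And>w. w \<in> dom2 PX m W \<Longrightarrow> sel (\<lambda>i. i) m w \<in> W" unfolding sel_id dom2_def by auto
  have kBs: "Ck scX PX (Lscale scF) (Ltop b scE PE scF PF) k (2*m) (dom2 PX m W) (B \<circ> sel (\<lambda>i. i) m)"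
    using Ck_sel[OF i1 i2 Ck_Suc_mono[OF Suc.prems(3)]] .
  have kAs: "Ck scX PX (Lscale scG) (Ltop b scF PF scG PG) k (2*m) (dom2 PX m W) (A \<circ> sel (\<lambda>i. i) m)"
    using Ck_sel[OF i1 i2 Ck_Suc_mono[OF Suc.prems(2)]] .
  have C1: "Ck scX PX (Lscale scG) (Ltop b scE PE scG PG) k (2*m) (dom2 PX m W) (\<lambda>w. A' w \<circ> (B \<circ> sel (\<lambda>i. i) m) w)"
    using Suc.IH[OF W2 kA kBs] .
  have C2: "Ck scX PX (Lscale scG) (Ltop b scE PE scG PG) k (2*m) (dom2 PX m W) (\<lambda>w. (A \<circ> sel (\<lambda>i. i) m) w \<circ> B' w)"
    using Suc.IH[OF W2 kAs kB] .
  have C: "Ck scX PX (Lscale scG) (Ltop b scE PE scG PG) k (2*m) (dom2 PX m W)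
     (\<lambda>w. (A' w \<circ> B (restrict w {..<m})) + (A (restrict w {..<m}) \<circ> B' w))"
    using Ck_add[OF E G C1 C2] unfolding o_def sel_id .
  have D: "is_dirderiv scX PX (Lscale scG) (Ltop b scE PE scG PG) m W (\<lambda>w. A w \<circ> B w)
           (\<lambda>w. (A' w \<circ> B (restrict w {..<m})) + (A (restrict w {..<m}) \<circ> B' w))"
    by (rule comp_deriv[OF X E F G Suc.prems(1) cA cB dA dB])
  have K: "continuous_map (subtopology (Xpow PX m) W) (Ltop b scE PE scG PG) (\<lambda>w. A w \<circ> B w)"
    by (rule comp_cont[OF E F G kinf Suc.prems(1) cA cB])
  show ?case using K D C by (simp only: Ck.simps) blast
qed

theorem proposition3p1:
  fixes scX :: "'k::real_normed_field \<Rightarrow> 'x::ab_group_add \<Rightarrow> 'x" and PX :: "('x \<Rightarrow> real) set"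
    and scE :: "'k \<Rightarrow> 'e::ab_group_add \<Rightarrow> 'e" and PE :: "('e \<Rightarrow> real) set"
    and scF :: "'k \<Rightarrow> 'f::ab_group_add \<Rightarrow> 'f" and PF :: "('f \<Rightarrow> real) set"
    and scG :: "'k \<Rightarrow> 'g::ab_group_add \<Rightarrow> 'g" and PG :: "('g \<Rightarrow> real) set"
    and U :: "'x set" and n :: enat and b :: bool
    and f :: "'x \<Rightarrow> 'e \<Rightarrow> 'f" and g :: "'x \<Rightarrow> 'f \<Rightarrow> 'g"
  assumes "lcs scX PX" and "lcs scE PE" and "lcs scF PF" and "lcs scG PG"
    and "kinf_space (lcs_top PX)"
    and "openin (lcs_top PX) U"
    and "Cn_map scX PX (Lscale scF) (Ltop b scE PE scF PF) n U f"
    and "Cn_map scX PX (Lscale scG) (Ltop b scF PF scG PG) n U g"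
  shows "Cn_map scX PX (Lscale scG) (Ltop b scE PE scG PG) n U (\<lambda>z. g z \<circ> f z)"
proof -
  define W where "W = {w \<in> topspace (Xpow PX 1). w 0 \<in> U}"
  have c0: "continuous_map (Xpow PX 1) (lcs_top PX) (\<lambda>w. w 0)"
    unfolding Xpow_def by (rule continuous_map_product_projection) simp
  have Wo: "openin (Xpow PX 1) W" unfolding W_def
    by (rule openin_continuous_map_preimage[OF c0 assms(6)])
  have key: "Ck scX PX (Lscale scG) (Ltop b scE PE scG PG) k 1 W (\<lambda>w. g (w 0) \<circ> f (w 0))"
    if "Ck scX PX (Lscale scG) (Ltop b scF PF scG PG) k 1 W (\<lambda>w. g (w 0))"
       "Ck scX PX (Lscale scF) (Ltop b scE PE scF PF) k 1 W (\<lambda>w. f (w 0))" for k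
    by (rule comp_Ck[OF assms(1-5) Wo that])
  show ?thesis
  proof (cases n)
    case (enat k)
    then show ?thesis using assms(7,8) key unfolding Cn_map_def Let_def W_def[symmetric] by simp
  next
    case infinity
    then show ?thesis using assms(7,8) key unfolding Cn_map_def Let_def W_def[symmetric] by simp
  qed
qed

end
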